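(* Consider an instance of the constructive \$-protection problem (all voter weights equal to 1). Suppose the defender succeeds by awarding a set $\mathcal{V}_F\subseteq\mathcal{V}$ with $\sum_{v_j\in\mathcal{V}_F}p_j^a\le F$. If $v_{j'}\prec v_j$, $v_{j'}\in\mathcal{V}_F$ and $v_j\notin\mathcal{V}_F$, then the defender also succeeds by awarding $(\mathcal{V}_F\setminus\{v_{j'}\})\cup\{v_j\}$.
   Context: Election model. Candidates $\mathcal{C}=\{c_1,\dots,c_m\}$, voters $\mathcal{V}=\{v_1,\dots,v_n\}$; voter $v_j$ has a preference list $\tau_j$ (a linear order of $\mathcal{C}$), weight $w_j$, awarding price $p_j^a\in\mathbb{Z}_{>0}$, bribing price $p_j^b\in\mathbb{Z}_{>0}$. A scoring rule $\alpha=(\alpha_1\ge\cdots\ge\alpha_m)$ of nonnegative integers gives the candidate at position $z$ of $v_j$'s list $w_j\alpha_z$ points; total score is the sum over voters. In the constructive \$-protection problem all $w_j=1$, there is a designated candidate $c^\star$, a defense budget $F$ and an attack budget $B$. Given awarded voters $\mathcal{V}_F$, the attacker may choose $\mathcal{V}_B\subseteq\mathcal{V}\setminus\mathcal{V}_F$ with $\sum_{v_j\in\mathcal{V}_B}p_j^b\le B$ and replace each list in $\mathcal{V}_B$ by an arbitrary list; the defender succeeds with $\mathcal{V}_F$ (total awarding price at most $F$) if no such bribery makes $c^\star$ obtain a total score strictly higher than every other candidate. Dominance: $v_{j'}\prec v_j$ if either (i) $\tau_j=\tau_{j'}$, $w_j\ge w_{j'}$, $p_j^a\le p_{j'}^a$,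 $p_j^b\le p_{j'}^b$ with at least one of these three inequalities strict; or (ii) $\tau_j=\tau_{j'}$, $w_j=w_{j'}$, $p_j^a=p_{j'}^a$, $p_j^b=p_{j'}^b$ and $j'<j$. *)

theory Defs
  imports Main
begin

text \<open>Candidates form a finite set Cs of some type 'c; a preference list is a linear
  order of Cs, represented as a list without repetitions whose elements are exactly Cs
  (first element = most preferred). Voters are indexed by 0..n-1. Positions are 0-indexed,
  so the paper's alpha_z corresponds to alpha (z-1).\<close>

definition is_pref :: "'c set \<Rightarrow> 'c list \<Rightarrow> bool" where
  "is_pref Cs \<tau> \<longleftrightarrow> distinct \<tau> \<and> set \<tau> = Cs"

definition pos :: "'c list \<Rightarrow> 'c \<Rightarrow> nat" where
  "pos \<tau> c = (LEAST i. i < length \<tau> \<and> \<tau> ! i = c)"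

definition scoring_rule :: "'c set \<Rightarrow> (nat \<Rightarrow> nat) \<Rightarrow> bool" where
  "scoring_rule Cs \<alpha> \<longleftrightarrow> (\<forall>i j. i \<le> j \<longrightarrow> j < card Cs \<longrightarrow> \<alpha> j \<le> \<alpha> i)"

definition score :: "(nat \<Rightarrow> nat) \<Rightarrow> nat \<Rightarrow> (nat \<Rightarrow> nat) \<Rightarrow> (nat \<Rightarrow> 'c list) \<Rightarrow> 'c \<Rightarrow> nat" where
  "score \<alpha> n w P c = (\<Sum>j<n. w j * \<alpha> (pos (P j) c))"

definition wins :: "'c set \<Rightarrow> (nat \<Rightarrow> nat) \<Rightarrow> nat \<Rightarrow> (nat \<Rightarrow> nat) \<Rightarrow> (nat \<Rightarrow> 'c list) \<Rightarrow> 'c \<Rightarrow> bool" where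
  "wins Cs \<alpha> n w P c \<longleftrightarrow> (\<forall>d\<in>Cs. d \<noteq> c \<longrightarrow> score \<alpha> n w P d < score \<alpha> n w P c)"

definition defender_succeeds ::
  "'c set \<Rightarrow> (nat \<Rightarrow> nat) \<Rightarrow> nat \<Rightarrow> (nat \<Rightarrow> nat) \<Rightarrow> (nat \<Rightarrow> 'c list) \<Rightarrow>
   (nat \<Rightarrow> nat) \<Rightarrow> (nat \<Rightarrow> nat) \<Rightarrow> 'c \<Rightarrow> nat \<Rightarrow> nat \<Rightarrow> nat set \<Rightarrow> bool" where
  "defender_succeeds Cs \<alpha> n w \<tau> pa pb cstar F B VF \<longleftrightarrow>
     VF \<subseteq> {..<n} \<and> (\<Sum>j\<in>VF. pa j) \<le> F \<and>
     (\<forall>VB P'. VB \<subseteq> {..<n} - VF \<longrightarrow> (\<Sum>j\<in>VB. pb j) \<le> B \<longrightarrow>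
        (\<forall>j\<in>VB. is_pref Cs (P' j)) \<longrightarrow> (\<forall>j. j \<notin> VB \<longrightarrow> P' j = \<tau> j) \<longrightarrow>
        \<not> wins Cs \<alpha> n w P' cstar)"

text \<open>Dominance: dominated w \<tau> pa pb j' j means v_j' \<prec> v_j.\<close>
definition dominated :: "(nat \<Rightarrow> nat) \<Rightarrow> (nat \<Rightarrow> 'c list) \<Rightarrow> (nat \<Rightarrow> nat) \<Rightarrow> (nat \<Rightarrow> nat) \<Rightarrow> nat \<Rightarrow> nat \<Rightarrow> bool" where
  "dominated w \<tau> pa pb j' j \<longleftrightarrow>
     (\<tau> j = \<tau> j' \<and> w j \<ge> w j' \<and> pa j \<le> pa j' \<and> pb j \<le> pb j' \<and>
        (w j > w j' \<or> pa j < pa j' \<or> pb j < pb j'))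
   \<or> (\<tau> j = \<tau> j' \<and> w j = w j' \<and> pa j = pa j' \<and> pb j = pb j' \<and> j' < j)"

end

theory Submission
  imports Defs
begin

definition sw :: "nat \<Rightarrow> nat \<Rightarrow> nat \<Rightarrow> nat" where
  "sw a b i = (if i = a then b else if i = b then a else i)"

lemma score_swap:
  assumes "j < n" "j' < n" "\<forall>i<n. w i = 1"
  shows "score \<alpha> n w (P \<circ> sw j j') c = score \<alpha> n w P c"
proof -
  let ?s = "sw j j'"
  have inv: "\<And>i. ?s (?s i) = i" by (simp add: sw_def)
  have im: "?s ` {..<n} \<subseteq> {..<n}" using assms(1,2) by (auto simp: sw_def)
  have b: "bij_betw ?s {..<n} {..<n}"
    by (rule bij_betw_byWitness[where f'="?s"]) (use inv im in auto)
  have "score \<alpha> n w (P \<circ> ?s) c = (\<Sum>i<n. \<alpha> (pos (P (?s i)) c))"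
    unfolding score_def using assms(3) by (intro sum.cong) auto
  also have "\<dots> = (\<Sum>i<n. \<alpha> (pos (P i) c))"
    using sum.reindex_bij_betw[OF b, of "\<lambda>i. \<alpha> (pos (P i) c)"] by simp
  also have "\<dots> = score \<alpha> n w P c"
    unfolding score_def using assms(3) by (intro sum.cong) auto
  finally show ?thesis .
qed

theorem lemma8:
  fixes Cs :: "'c set" and \<alpha> :: "nat \<Rightarrow> nat" and n :: nat and w :: "nat \<Rightarrow> nat"
    and \<tau> :: "nat \<Rightarrow> 'c list" and pa pb :: "nat \<Rightarrow> nat" and cstar :: 'c
    and F B :: nat and VF :: "nat set" and j j' :: nat
  assumes "finite Cs" and "cstar \<in> Cs"
    and "scoring_rule Cs \<alpha>"
    and "\<forall>i<n. is_pref Cs (\<tau> i)"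
    and "\<forall>i<n. w i = 1"
    and "\<forall>i<n. pa i > 0 \<and> pb i > 0"
    and "j < n" and "j' < n"
    and "defender_succeeds Cs \<alpha> n w \<tau> pa pb cstar F B VF"
    and "dominated w \<tau> pa pb j' j"
    and "j' \<in> VF" and "j \<notin> VF"
  shows "defender_succeeds Cs \<alpha> n w \<tau> pa pb cstar F B ((VF - {j'}) \<union> {j})"
proof -
  note ds = assms(9)[unfolded defender_succeeds_def]
  have VFn: "VF \<subseteq> {..<n}" using ds by blast
  have dsr: "\<And>VB P'. VB \<subseteq> {..<n} - VF \<Longrightarrow> (\<Sum>j\<in>VB. pb j) \<le> B \<Longrightarrow>
        (\<forall>j\<in>VB. is_pref Cs (P' j)) \<Longrightarrow> (\<forall>j. j \<notin> VB \<longrightarrow> P' j = \<tau> j) \<Longrightarrow>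
        \<not> wins Cs \<alpha> n w P' cstar" using ds by simp
  have fin: "finite VF" using VFn finite_subset by blast
  have ne: "j \<noteq> j'" using assms(11,12) by blast
  have dom: "\<tau> j = \<tau> j'" "pa j \<le> pa j'" "pb j \<le> pb j'"
    using assms(10) unfolding dominated_def by auto
  let ?VF' = "(VF - {j'}) \<union> {j}"
  have "(\<Sum>i\<in>?VF'. pa i) = (\<Sum>i\<in>VF - {j'}. pa i) + pa j"
    using fin assms(12) by simp
  also have "\<dots> \<le> (\<Sum>i\<in>VF - {j'}. pa i) + pa j'" using dom by simp
  also have "\<dots> = (\<Sum>i\<in>VF. pa i)" using fin assms(11) by (simp add: sum.remove)
  finally have cost: "(\<Sum>i\<in>?VF'. pa i) \<le> F" using ds by linarith
  have main: "\<not> wins Cs \<alpha> n w P' cstar"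
    if VB: "VB \<subseteq> {..<n} - ?VF'" and pbB: "(\<Sum>i\<in>VB. pb i) \<le> B"
      and pr: "\<forall>i\<in>VB. is_pref Cs (P' i)" and rest: "\<forall>i. i \<notin> VB \<longrightarrow> P' i = \<tau> i" for VB P'
  proof (cases "j' \<in> VB")
    case False
    have "VB \<subseteq> {..<n} - VF" using VB False by blast
    then show ?thesis using pbB pr rest by (rule dsr)
  next
    case True
    let ?s = "sw j j'"
    let ?P = "P' \<circ> ?s"
    let ?VB = "(VB - {j'}) \<union> {j}"
    have jVB: "j \<notin> VB" using VB by blast
    have finVB: "finite VB" using VB finite_subset by blast
    have "?VB \<subseteq> {..<n} - VF" using VB assms(7,12) by blast
    moreover have "(\<Sum>i\<in>?VB. pb i) \<le> B"
    proof -
      have "(\<Sum>i\<in>?VB. pb i) = (\<Sum>i\<in>VB - {j'}. pb i) + pb j" using finVB jVB by simp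
      also have "\<dots> \<le> (\<Sum>i\<in>VB - {j'}. pb i) + pb j'" using dom by simp
      also have "\<dots> = (\<Sum>i\<in>VB. pb i)" using finVB True by (simp add: sum.remove)
      finally show ?thesis using pbB by linarith
    qed
    moreover have "\<forall>i\<in>?VB. is_pref Cs (?P i)"
    proof
      fix i assume i: "i \<in> ?VB"
      show "is_pref Cs (?P i)"
      proof (cases "i = j")
        case True
        then show ?thesis using pr \<open>j' \<in> VB\<close> by (simp add: sw_def)
      next
        case False
        then have "i \<in> VB" "i \<noteq> j'" using i by auto
        then show ?thesis using pr False by (simp add: sw_def)
      qed
    qed
    moreover have "\<forall>i. i \<notin> ?VB \<longrightarrow> ?P i = \<tau> i"
    proof (intro allI impI)
      fix i assume i: "i \<notin> ?VB"
      show "?P i = \<tau> i"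
      proof (cases "i = j'")
        case True
        then show ?thesis using rest jVB dom(1) ne by (simp add: sw_def)
      next
        case False
        then have "i \<notin> VB" "i \<noteq> j" using i by auto
        then show ?thesis using rest False by (simp add: sw_def)
      qed
    qed
    ultimately have "\<not> wins Cs \<alpha> n w ?P cstar" by (rule dsr)
    moreover have "\<And>c. score \<alpha> n w ?P c = score \<alpha> n w P' c"
      by (rule score_swap[OF assms(7,8,5)])
    ultimately show ?thesis unfolding wins_def by simp
  qed
  show ?thesis unfolding defender_succeeds_def
    using VFn assms(7) cost main by (intro conjI allI impI) auto
qed

end
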